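(* Let $Z$ be a smooth toric variety with ample anticanonical bundle which is obtained from $\mathbb{A}^l$ by a sequence of blow-ups, each centered in a torus-fixed point of the previous variety. Then $Z$ is either $\mathbb{A}^l$ or the blow-up of $\mathbb{A}^l$ at the torus-fixed point (the origin).
   Context: $\mathbb{A}^l$ is the affine toric variety of the torus $S=(\mathbb{C}^* )^l$ (fan: the cone spanned by a lattice basis and its faces); blow-ups at torus-fixed points are toric, corresponding to star subdivision of a maximal cone at the sum of its generators. *)

theory Defs
  imports "HOL-Analysis.Analysis"
begin

text \<open>Smooth fans in the lattice N = Z^n (index type 'n, so l = CARD('n)).
  A smooth fan all of whose maximal cones are full-dimensional is recorded by
  its set of maximal cones; each maximal cone is recorded by its set of
  primitive ray generators (a lattice basis). The fan itself is the set of
  all faces of these cones.\<close>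

type_synonym 'n cone_gens = "(int ^ 'n) set"
type_synonym 'n smooth_fan = "'n cone_gens set"

definition std_cone :: "('n::finite) cone_gens" where
  "std_cone = {axis i 1 | i. True}"

definition affine_space_fan :: "('n::finite) smooth_fan" where
  "affine_space_fan = {std_cone}"

text \<open>Blow-up at the torus-fixed point corresponding to the maximal cone sigma:
  star subdivision of sigma at the sum of its generators.\<close>
definition star_subdiv :: "('n::finite) smooth_fan \<Rightarrow> 'n cone_gens \<Rightarrow> 'n smooth_fan" where
  "star_subdiv F \<sigma> = (F - {\<sigma>}) \<union> {insert (\<Sum>\<sigma>) (\<sigma> - {w}) | w. w \<in> \<sigma>}"

inductive iterated_point_blowup :: "('n::finite) smooth_fan \<Rightarrow> bool" where
  base: "iterated_point_blowup affine_space_fan"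
| step: "iterated_point_blowup F \<Longrightarrow> \<sigma> \<in> F \<Longrightarrow> iterated_point_blowup (star_subdiv F \<sigma>)"

definition pairing :: "real ^ ('n::finite) \<Rightarrow> int ^ 'n \<Rightarrow> real" where
  "pairing m u = (\<Sum>i\<in>UNIV. m $ i * of_int (u $ i))"

text \<open>Ampleness of the anticanonical divisor -K = sum of all torus-invariant prime
  divisors, for a smooth fan with convex full-dimensional support: its support
  function is strictly convex, i.e. for each maximal cone sigma the linear
  functional taking value 1 on the generators of sigma takes value < 1 on every
  ray generator of the fan not in sigma (Cox-Little-Schenck, Thm 6.1.14,
  Lemma 6.1.13).\<close>
definition anticanonical_ample :: "('n::finite) smooth_fan \<Rightarrow> bool" where
  "anticanonical_ample F \<longleftrightarrow>
     (\<forall>\<sigma>\<in>F. \<exists>m :: real ^ 'n.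
        (\<forall>w\<in>\<sigma>. pairing m w = 1) \<and> (\<forall>u\<in>\<Union>F - \<sigma>. pairing m u < 1))"

end

theory Submission
  imports Defs
begin

definition indep_int :: "('n::finite) cone_gens \<Rightarrow> bool" where
  "indep_int \<sigma> \<longleftrightarrow> (\<forall>c. (\<Sum>v\<in>\<sigma>. c v *s v) = 0 \<longrightarrow> (\<forall>v\<in>\<sigma>. c v = (0::int)))"

definition CI :: "('n::finite) smooth_fan \<Rightarrow> bool" where
  "CI F \<longleftrightarrow> (\<forall>\<sigma>\<in>F. finite \<sigma> \<and> card \<sigma> = CARD('n) \<and> indep_int \<sigma>)"

definition good :: "int \<Rightarrow> ('n::finite) smooth_fan \<Rightarrow> bool" where
  "good k F \<longleftrightarrow> (\<exists>\<tau>\<in>F. \<exists>u\<in>\<Union>F - \<tau>. \<exists>c w. u = (\<Sum>v\<in>\<tau>. c v *s v) \<and> w \<in> \<tau>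
      \<and> c w < 0 \<and> k \<le> (\<Sum>v\<in>\<tau>. c v))"

lemma comb_diff:
  "(\<Sum>v\<in>\<sigma>. (a v - b v) *s v) = (\<Sum>v\<in>\<sigma>. a v *s v) - (\<Sum>v\<in>\<sigma>. (b v::int) *s v)"
  by (simp add: vec_eq_iff sum_component algebra_simps sum_subtractf)

lemma comb_unique:
  assumes "indep_int \<sigma>" "(\<Sum>v\<in>\<sigma>. a v *s v) = (\<Sum>v\<in>\<sigma>. b v *s v)" "v \<in> \<sigma>"
  shows "a v = b v"
proof -
  have "(\<Sum>v\<in>\<sigma>. (a v - b v) *s v) = 0" using assms(2) comb_diff[of a b \<sigma>] by (simp only: diff_self)
  then show ?thesis using assms(1,3) unfolding indep_int_def by fastforce
qed

lemma comb_one: "(\<Sum>v\<in>\<sigma>. (1::int) *s v) = \<Sum>\<sigma>"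
  by simp

lemma comb_single:
  assumes "finite \<sigma>" "x \<in> \<sigma>"
  shows "(\<Sum>v\<in>\<sigma>. (if v = x then 1 else 0::int) *s v) = x"
proof -
  have "(\<Sum>v\<in>\<sigma>. (if v = x then 1 else 0::int) *s v) = (\<Sum>v\<in>\<sigma>. if v = x then v else 0)"
    by (rule sum.cong) auto
  also have "\<dots> = x" using assms by (simp add: sum.delta')
  finally show ?thesis .
qed

lemma sum_notin:
  assumes "finite \<sigma>" "indep_int \<sigma>" "2 \<le> card \<sigma>"
  shows "\<Sum>\<sigma> \<notin> \<sigma>"
proof
  assume h: "\<Sum>\<sigma> \<in> \<sigma>"
  obtain y where y: "y \<in> \<sigma>" "y \<noteq> \<Sum>\<sigma>"
  proof -
    have "\<sigma> - {\<Sum>\<sigma>} \<noteq> {}"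
    proof
      assume "\<sigma> - {\<Sum>\<sigma>} = {}"
      then have "\<sigma> \<subseteq> {\<Sum>\<sigma>}" by blast
      then have "card \<sigma> \<le> 1" using card_mono[of "{\<Sum>\<sigma>}" \<sigma>] by simp
      then show False using assms(3) by simp
    qed
    then show ?thesis using that by blast
  qed
  have "(\<Sum>v\<in>\<sigma>. (1::int) *s v) = (\<Sum>v\<in>\<sigma>. (if v = \<Sum>\<sigma> then 1 else 0::int) *s v)"
    using comb_single[OF assms(1) h] by simp
  from comb_unique[OF assms(2) this y(1)] y(2) show False by simp
qed

lemma new_cone:
  assumes fin: "finite \<sigma>" and ind: "indep_int \<sigma>" and c2: "2 \<le> card \<sigma>" and w: "w \<in> \<sigma>"
  shows "finite (insert (\<Sum>\<sigma>) (\<sigma> - {w}))" "card (insert (\<Sum>\<sigma>) (\<sigma> - {w})) = card \<sigma>"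
    "indep_int (insert (\<Sum>\<sigma>) (\<sigma> - {w}))"
proof -
  let ?s = "\<Sum>\<sigma>"
  have sn: "?s \<notin> \<sigma> - {w}" using sum_notin[OF fin ind c2] by blast
  show "finite (insert ?s (\<sigma> - {w}))" using fin by simp
  show "card (insert ?s (\<sigma> - {w})) = card \<sigma>"
    using fin sn w c2 by (simp add: card_Diff_singleton)
  show "indep_int (insert ?s (\<sigma> - {w}))"
    unfolding indep_int_def
  proof (intro allI impI ballI)
    fix d :: "int ^ 'a \<Rightarrow> int" and x
    assume H: "(\<Sum>v\<in>insert ?s (\<sigma> - {w}). d v *s v) = 0" and x: "x \<in> insert ?s (\<sigma> - {w})"
    define e where "e v = (if v = w then d ?s else d v + d ?s)" for v
    have eq: "(\<Sum>v\<in>\<sigma>. e v *s v) = (\<Sum>v\<in>insert ?s (\<sigma> - {w}). d v *s v)"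
    proof (subst vec_eq_iff, intro allI)
      fix i
      have s_i: "?s $ i = w $ i + (\<Sum>v\<in>\<sigma> - {w}. v $ i)"
        using fin w by (simp add: sum_component sum.remove)
      have "(\<Sum>v\<in>\<sigma>. e v *s v) $ i = e w * w $ i + (\<Sum>v\<in>\<sigma> - {w}. e v * v $ i)"
        using fin w by (simp add: sum_component sum.remove)
      also have "(\<Sum>v\<in>\<sigma> - {w}. e v * v $ i) = (\<Sum>v\<in>\<sigma> - {w}. d v * v $ i + d ?s * v $ i)"
        by (rule sum.cong) (auto simp: e_def algebra_simps)
      also have "e w * w $ i + \<dots> = d ?s * ?s $ i + (\<Sum>v\<in>\<sigma> - {w}. d v * v $ i)"
        unfolding s_i by (simp add: e_def sum.distrib sum_distrib_left algebra_simps)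
      also have "\<dots> = (\<Sum>v\<in>insert ?s (\<sigma> - {w}). d v *s v) $ i"
        using fin sn by (simp add: sum_component)
      finally show "(\<Sum>v\<in>\<sigma>. e v *s v) $ i = (\<Sum>v\<in>insert ?s (\<sigma> - {w}). d v *s v) $ i" .
    qed
    have e0: "\<forall>v\<in>\<sigma>. e v = 0" using ind H eq unfolding indep_int_def by simp
    have "e w = 0" using e0 w by blast
    then have ds: "d ?s = 0" by (simp add: e_def)
    show "d x = 0"
    proof (cases "x = ?s")
      case True then show ?thesis using ds by simp
    next
      case False
      then have "x \<in> \<sigma>" "x \<noteq> w" using x by auto
      then show ?thesis using e0 ds by (auto simp: e_def)
    qed
  qed
qed

lemma CI_star:
  fixes G :: "('n::finite) smooth_fan"
  assumes "CI G" "2 \<le> CARD('n)" "\<sigma> \<in> G"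
  shows "CI (star_subdiv G \<sigma>)"
  unfolding CI_def
proof
  fix \<rho> assume "\<rho> \<in> star_subdiv G \<sigma>"
  then consider "\<rho> \<in> G" | w where "w \<in> \<sigma>" "\<rho> = insert (\<Sum>\<sigma>) (\<sigma> - {w})"
    unfolding star_subdiv_def by blast
  then show "finite \<rho> \<and> card \<rho> = CARD('n) \<and> indep_int \<rho>"
  proof cases
    case 1 then show ?thesis using assms(1) unfolding CI_def by blast
  next
    case 2
    have "finite \<sigma>" "card \<sigma> = CARD('n)" "indep_int \<sigma>" using assms(1,3) unfolding CI_def by auto
    then show ?thesis using new_cone[of \<sigma> w] 2 assms(2) by simp
  qed
qed

lemma ray_star:
  fixes G :: "('n::finite) smooth_fan"
  assumes "CI G" "2 \<le> CARD('n)" "\<sigma> \<in> G" "x \<in> \<Union>G"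
  shows "x \<in> \<Union>(star_subdiv G \<sigma>)"
proof -
  obtain \<rho> where r: "\<rho> \<in> G" "x \<in> \<rho>" using assms(4) by blast
  show ?thesis
  proof (cases "\<rho> = \<sigma>")
    case False then show ?thesis using r unfolding star_subdiv_def by blast
  next
    case True
    have fin: "finite \<sigma>" and c: "card \<sigma> = CARD('n)" using assms(1,3) unfolding CI_def by auto
    have "\<sigma> - {x} \<noteq> {}"
    proof
      assume "\<sigma> - {x} = {}"
      then have "\<sigma> \<subseteq> {x}" by blast
      then have "card \<sigma> \<le> 1" using card_mono[of "{x}" \<sigma>] by simp
      then show False using assms(2) c by simp
    qed
    then obtain w where w: "w \<in> \<sigma>" "w \<noteq> x" by blast
    then have "insert (\<Sum>\<sigma>) (\<sigma> - {w}) \<in> star_subdiv G \<sigma>" unfolding star_subdiv_def by blast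
    moreover have "x \<in> insert (\<Sum>\<sigma>) (\<sigma> - {w})" using r True w by blast
    ultimately show ?thesis by blast
  qed
qed

lemma star_card1:
  assumes "\<sigma> \<in> F" "card \<sigma> = 1"
  shows "star_subdiv F \<sigma> = F"
proof -
  obtain v where v: "\<sigma> = {v}" using assms(2) card_1_singletonE by blast
  have "{insert (\<Sum>\<sigma>) (\<sigma> - {w}) | w. w \<in> \<sigma>} = {\<sigma>}" using v by auto
  then show ?thesis using assms(1) unfolding star_subdiv_def by auto
qed

lemma blowup_good:
  fixes G :: "('n::finite) smooth_fan"
  assumes ci: "CI G" and l2: "2 \<le> CARD('n)" and sG: "\<sigma> \<in> G" and uG: "u \<in> \<Union>G" and us: "u \<notin> \<sigma>"
    and w: "w \<in> \<sigma>" and cw: "c w < 0" and u: "u = (\<Sum>v\<in>\<sigma>. c v *s v)"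
  shows "good ((\<Sum>v\<in>\<sigma>. c v) - (int (card \<sigma>) - 1) * c w) (star_subdiv G \<sigma>)"
proof -
  have fin: "finite \<sigma>" and cs: "card \<sigma> = CARD('n)" and ind: "indep_int \<sigma>"
    using ci sG unfolding CI_def by auto
  have c2: "2 \<le> card \<sigma>" using cs l2 by simp
  let ?s = "\<Sum>\<sigma>"
  let ?\<rho> = "insert ?s (\<sigma> - {w})"
  have sn: "?s \<notin> \<sigma> - {w}" using sum_notin[OF fin ind c2] by blast
  define c' where "c' v = (if v = ?s then c w else c v - c w)" for v
  have rho: "?\<rho> \<in> star_subdiv G \<sigma>" using w unfolding star_subdiv_def by blast
  have us': "u \<noteq> ?s"
  proof
    assume "u = ?s"
    then have "(\<Sum>v\<in>\<sigma>. c v *s v) = (\<Sum>v\<in>\<sigma>. (1::int) *s v)" using u by simp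
    from comb_unique[OF ind this w] cw show False by simp
  qed
  have uF: "u \<in> \<Union>(star_subdiv G \<sigma>) - ?\<rho>"
    using ray_star[OF ci l2 sG uG] us us' by blast
  have ueq: "u = (\<Sum>v\<in>?\<rho>. c' v *s v)"
  proof (subst vec_eq_iff, intro allI)
    fix i
    have s_i: "?s $ i = w $ i + (\<Sum>v\<in>\<sigma> - {w}. v $ i)"
      using fin w by (simp add: sum_component sum.remove)
    have "u $ i = c w * w $ i + (\<Sum>v\<in>\<sigma> - {w}. c v * v $ i)"
      using fin w u by (simp add: sum_component sum.remove)
    also have "\<dots> = c w * ?s $ i + (\<Sum>v\<in>\<sigma> - {w}. (c v - c w) * v $ i)"
      unfolding s_i by (simp add: sum_subtractf sum_distrib_left algebra_simps)
    also have "(\<Sum>v\<in>\<sigma> - {w}. (c v - c w) * v $ i) = (\<Sum>v\<in>\<sigma> - {w}. c' v * v $ i)"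
      by (rule sum.cong) (use sn in \<open>auto simp: c'_def\<close>)
    also have "c w * ?s $ i + \<dots> = (\<Sum>v\<in>?\<rho>. c' v *s v) $ i"
      using fin sn by (simp add: sum_component c'_def)
    finally show "u $ i = (\<Sum>v\<in>?\<rho>. c' v *s v) $ i" .
  qed
  have sumeq: "(\<Sum>v\<in>?\<rho>. c' v) = (\<Sum>v\<in>\<sigma>. c v) - (int (card \<sigma>) - 1) * c w"
  proof -
    have "(\<Sum>v\<in>?\<rho>. c' v) = c w + (\<Sum>v\<in>\<sigma> - {w}. c' v)"
      using fin sn by (simp add: c'_def)
    also have "(\<Sum>v\<in>\<sigma> - {w}. c' v) = (\<Sum>v\<in>\<sigma> - {w}. c v - c w)"
      by (rule sum.cong) (use sn in \<open>auto simp: c'_def\<close>)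
    also have "\<dots> = (\<Sum>v\<in>\<sigma> - {w}. c v) - int (card \<sigma> - 1) * c w"
      using fin w by (simp add: sum_subtractf card_Diff_singleton)
    also have "(\<Sum>v\<in>\<sigma> - {w}. c v) = (\<Sum>v\<in>\<sigma>. c v) - c w"
      using fin w by (simp add: sum_diff1)
    finally show ?thesis using c2 by (simp add: of_nat_diff algebra_simps)
  qed
  have "?s \<in> ?\<rho>" by simp
  moreover have "c' ?s < 0" using cw by (simp add: c'_def)
  ultimately show ?thesis unfolding good_def using rho uF ueq sumeq
    by (intro bexI[of _ ?\<rho>]) (auto intro!: exI[of _ u] exI[of _ c'] exI[of _ ?s])
qed

lemma good_step:
  fixes G :: "('n::finite) smooth_fan"
  assumes g: "good k G" and ci: "CI G" and l2: "2 \<le> CARD('n)" and sG: "\<sigma> \<in> G"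
  shows "good k (star_subdiv G \<sigma>)"
proof -
  obtain \<tau> u c w where t: "\<tau> \<in> G" and uu: "u \<in> \<Union>G - \<tau>" and u: "u = (\<Sum>v\<in>\<tau>. c v *s v)"
    and w: "w \<in> \<tau>" and cw: "c w < 0" and k: "k \<le> (\<Sum>v\<in>\<tau>. c v)"
    using g unfolding good_def by blast
  show ?thesis
  proof (cases "\<sigma> = \<tau>")
    case True
    have cs: "card \<tau> = CARD('n)" using ci t unfolding CI_def by auto
    have g2: "good ((\<Sum>v\<in>\<tau>. c v) - (int (card \<tau>) - 1) * c w) (star_subdiv G \<sigma>)"
      using blowup_good[OF ci l2 t _ _ w cw u] uu True by blast
    have "0 \<le> (int (card \<tau>) - 1)" using cs l2 by simp
    then have "(int (card \<tau>) - 1) * c w \<le> 0" using cw by (simp add: mult_nonneg_nonpos)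
    then have "k \<le> (\<Sum>v\<in>\<tau>. c v) - (int (card \<tau>) - 1) * c w" using k by simp
    then show ?thesis using g2 unfolding good_def by (meson order_trans)
  next
    case False
    then have "\<tau> \<in> star_subdiv G \<sigma>" using t unfolding star_subdiv_def by blast
    moreover have "u \<in> \<Union>(star_subdiv G \<sigma>) - \<tau>" using ray_star[OF ci l2 sG] uu by blast
    ultimately show ?thesis unfolding good_def using u w cw k by blast
  qed
qed

lemma std_eq: "(std_cone :: ('n::finite) cone_gens) = range (\<lambda>i. axis i 1)"
  unfolding std_cone_def by auto

lemma axis_inj: "inj (\<lambda>i::'n::finite. axis i (1::int))"
proof (rule injI)
  fix i j :: 'n assume "axis i (1::int) = axis j 1"
  then have "axis i (1::int) $ i = axis j 1 $ i" by simp
  then show "i = j" by (simp add: axis_def split: if_splits)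
qed

lemma std_sum: "(\<Sum>(std_cone :: ('n::finite) cone_gens)) $ k = 1"
proof -
  have "(\<Sum>(std_cone :: 'n cone_gens)) = (\<Sum>i\<in>UNIV. axis i (1::int))"
    unfolding std_eq by (simp add: sum.reindex[OF axis_inj])
  then show ?thesis by (simp add: sum_component axis_def)
qed

lemma CI_affine: "CI (affine_space_fan :: ('n::finite) smooth_fan)"
  unfolding CI_def affine_space_fan_def
proof safe
  show "finite (std_cone :: 'n cone_gens)" unfolding std_eq by simp
  show "card (std_cone :: 'n cone_gens) = CARD('n)" unfolding std_eq by (simp add: card_image axis_inj)
  show "indep_int (std_cone :: 'n cone_gens)" unfolding indep_int_def
  proof (intro allI impI ballI)
    fix c :: "int ^ 'n \<Rightarrow> int" and x
    assume H: "(\<Sum>v\<in>std_cone. c v *s v) = 0" and x: "x \<in> (std_cone :: 'n cone_gens)"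
    obtain j where j: "x = axis j 1" using x unfolding std_eq by blast
    have "(\<Sum>v\<in>std_cone. c v *s v) = (\<Sum>i\<in>UNIV. c (axis i 1) *s axis i (1::int))"
      unfolding std_eq by (simp add: sum.reindex[OF axis_inj])
    then have "(\<Sum>i\<in>UNIV. c (axis i 1) *s axis i (1::int)) $ j = 0" using H by simp
    then have "(\<Sum>i\<in>UNIV. c (axis i 1) * (axis i (1::int) $ j)) = 0" by (simp add: sum_component)
    moreover have "(\<Sum>i\<in>UNIV. c (axis i 1) * (axis i (1::int) $ j)) = (\<Sum>i\<in>UNIV. if i = j then c (axis i 1) else 0)"
      by (rule sum.cong) (auto simp: axis_def)
    ultimately show "c x = 0" using j by simp
  qed
qed

lemma F1_good:
  fixes \<sigma> :: "('n::finite) cone_gens"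
  assumes l2: "2 \<le> CARD('n)" and sF: "\<sigma> \<in> star_subdiv affine_space_fan std_cone"
  shows "good 1 (star_subdiv (star_subdiv affine_space_fan std_cone) \<sigma>)"
proof -
  let ?F1 = "star_subdiv affine_space_fan (std_cone :: 'n cone_gens)"
  let ?std = "std_cone :: 'n cone_gens"
  let ?s = "\<Sum>?std"
  have ciA: "CI (affine_space_fan :: 'n smooth_fan)" by (rule CI_affine)
  have stdA: "?std \<in> affine_space_fan" unfolding affine_space_fan_def by simp
  have ci1: "CI ?F1" using CI_star[OF ciA l2 stdA] .
  have fin: "finite ?std" and cs: "card ?std = CARD('n)" and ind: "indep_int ?std"
    using ciA stdA unfolding CI_def by auto
  have sn: "?s \<notin> ?std" using sum_notin[OF fin ind] cs l2 by simp
  obtain i where \<sigma>: "\<sigma> = insert ?s (?std - {axis i 1})"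
    using sF unfolding star_subdiv_def affine_space_fan_def std_eq by auto
  have "UNIV - {i} \<noteq> {}"
  proof
    assume "UNIV - {i} = {}"
    then have "(UNIV :: 'n set) \<subseteq> {i}" by blast
    then have "CARD('n) \<le> 1" using card_mono[of "{i}" UNIV] by simp
    then show False using l2 by simp
  qed
  then obtain j where ji: "j \<noteq> i" by blast
  let ?u = "axis i (1::int) :: int ^ 'n"
  let ?w = "axis j (1::int) :: int ^ 'n"
  have uw: "?u \<noteq> ?w" using ji axis_inj unfolding inj_def by metis
  have ustd: "?u \<in> ?std" "?w \<in> ?std" unfolding std_eq by auto
  define c where "c x = (if x = ?s then 1 else (-1::int))" for x
  have sG: "\<sigma> \<in> ?F1" using sF .
  have uG: "?u \<in> \<Union>?F1"
  proof -
    have "insert ?s (?std - {?w}) \<in> ?F1" using ustd unfolding star_subdiv_def affine_space_fan_def by blast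
    moreover have "?u \<in> insert ?s (?std - {?w})" using ustd uw by blast
    ultimately show ?thesis by blast
  qed
  have us: "?u \<notin> \<sigma>" using \<sigma> sn ustd by auto
  have w: "?w \<in> \<sigma>" using \<sigma> ustd uw by auto
  have cw: "c ?w = -1" using sn ustd by (auto simp: c_def)
  have sn': "?s \<notin> ?std - {?u}" using sn by blast
  have ueq: "?u = (\<Sum>v\<in>\<sigma>. c v *s v)"
  proof (subst vec_eq_iff, intro allI)
    fix k
    have s_k: "?s $ k = ?u $ k + (\<Sum>v\<in>?std - {?u}. v $ k)"
      using fin ustd by (simp add: sum_component sum.remove)
    have "(\<Sum>v\<in>\<sigma>. c v *s v) $ k = ?s $ k + (\<Sum>v\<in>?std - {?u}. c v * v $ k)"
      unfolding \<sigma> using fin sn' by (simp add: sum_component c_def)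
    also have "(\<Sum>v\<in>?std - {?u}. c v * v $ k) = (\<Sum>v\<in>?std - {?u}. - (v $ k))"
      by (rule sum.cong) (use sn in \<open>auto simp: c_def\<close>)
    finally show "?u $ k = (\<Sum>v\<in>\<sigma>. c v *s v) $ k" unfolding s_k by (simp add: sum_negf)
  qed
  have csig: "card \<sigma> = CARD('n)" using ci1 sG unfolding CI_def by auto
  have sumc: "(\<Sum>v\<in>\<sigma>. c v) = 1 - (int CARD('n) - 1)"
  proof -
    have "(\<Sum>v\<in>\<sigma>. c v) = 1 + (\<Sum>v\<in>?std - {?u}. c v)"
      unfolding \<sigma> using fin sn' by (simp add: c_def)
    also have "(\<Sum>v\<in>?std - {?u}. c v) = (\<Sum>v\<in>?std - {?u}. -1)"
      by (rule sum.cong) (use sn in \<open>auto simp: c_def\<close>)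
    also have "\<dots> = - int (card ?std - 1)" using fin ustd by (simp add: card_Diff_singleton)
    finally show ?thesis using cs l2 by (simp add: of_nat_diff)
  qed
  have "good ((\<Sum>v\<in>\<sigma>. c v) - (int (card \<sigma>) - 1) * c ?w) (star_subdiv ?F1 \<sigma>)"
    using blowup_good[OF ci1 l2 sG uG us w _ ueq] cw by simp
  then show ?thesis using sumc csig cw by simp
qed

lemma pairing_comb:
  "pairing m (\<Sum>v\<in>\<tau>. c v *s v) = (\<Sum>v\<in>\<tau>. of_int (c v) * pairing m v)"
  unfolding pairing_def
  by (simp add: sum_component sum_distrib_left sum_distrib_right algebra_simps sum.swap[of _ UNIV \<tau>])

lemma main_inv:
  fixes F :: "('n::finite) smooth_fan"
  assumes "iterated_point_blowup F"
  shows "CI F \<and> (F = affine_space_fan \<or> F = star_subdiv affine_space_fan std_cone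
           \<or> (2 \<le> CARD('n) \<and> good 1 F))"
  using assms
proof induction
  case base
  then show ?case using CI_affine by simp
next
  case (step G \<sigma>)
  have ci: "CI G" using step.IH by simp
  show ?case
  proof (cases "CARD('n) = 1")
    case True
    have "card \<sigma> = 1" using ci step.hyps(2) True unfolding CI_def by auto
    then show ?thesis using star_card1[OF step.hyps(2)] step.IH by simp
  next
    case False
    have "CARD('n) \<noteq> 0" by simp
    then have l2: "2 \<le> CARD('n)" using False by linarith
    have ci': "CI (star_subdiv G \<sigma>)" using CI_star[OF ci l2 step.hyps(2)] .
    consider "G = affine_space_fan" | "G = star_subdiv affine_space_fan std_cone" | "good 1 G"
      using step.IH by blast
    then show ?thesis
    proof cases
      case 1
      then have "\<sigma> = std_cone" using step.hyps(2) unfolding affine_space_fan_def by simp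
      then show ?thesis using 1 ci' by simp
    next
      case 2
      then show ?thesis using F1_good[OF l2] step.hyps(2) ci' l2 by simp
    next
      case 3
      then show ?thesis using good_step[OF 3 ci l2 step.hyps(2)] ci' l2 by simp
    qed
  qed
qed

theorem proposition3p1:
  fixes F :: "('n::finite) smooth_fan"
  assumes "iterated_point_blowup F"
    and "anticanonical_ample F"
  shows "F = affine_space_fan \<or> F = star_subdiv affine_space_fan std_cone"
proof (rule ccontr)
  assume "\<not> ?thesis"
  then have "good 1 F" using main_inv[OF assms(1)] by blast
  then obtain \<tau> u c w where t: "\<tau> \<in> F" and uu: "u \<in> \<Union>F - \<tau>" and u: "u = (\<Sum>v\<in>\<tau>. c v *s v)"
    and k: "1 \<le> (\<Sum>v\<in>\<tau>. c v)"
    unfolding good_def by blast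
  obtain m where m1: "\<forall>w\<in>\<tau>. pairing m w = 1" and m2: "\<forall>u\<in>\<Union>F - \<tau>. pairing m u < 1"
    using assms(2) t unfolding anticanonical_ample_def by blast
  have "pairing m u = (\<Sum>v\<in>\<tau>. of_int (c v) * pairing m v)" using u pairing_comb by simp
  also have "\<dots> = (\<Sum>v\<in>\<tau>. of_int (c v))" using m1 by simp
  also have "\<dots> = of_int (\<Sum>v\<in>\<tau>. c v)" by (simp only: of_int_sum)
  finally have pe: "pairing m u = of_int (\<Sum>v\<in>\<tau>. c v)" .
  have "(1::real) \<le> of_int (\<Sum>v\<in>\<tau>. c v)" using k by linarith
  then have "1 \<le> pairing m u" using pe by simp
  moreover have "pairing m u < 1" using m2 uu by (rule bspec)
  ultimately show False by linarith
qed

end
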